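(* Let $L$ and $L'$ be isomorphic intersection lattices such that $L'$ is full and $\hat 1_{L'}\in\bullet(\mathrm{nci}(L'))$. Then $\hat 1_L\in\bullet(\mathrm{nci}(L))$.
   Context: A finite family $\mathcal{F}$ of sets is non-trivial if it is non-empty and no $X\in\mathcal{F}$ satisfies $X=\bigcup\mathcal{F}$. For such $\mathcal{F}$ and non-empty $\mathcal{T}\subseteq\mathcal{F}$, let $S_{\mathcal{T}}=\bigcap\mathcal{T}$, and let $S_\emptyset=\bigcup\mathcal{F}$. The intersection lattice of $\mathcal{F}$ is $\mathbb{L}_{\mathcal{F}}=(\{S_{\mathcal{T}}\mid\mathcal{T}\subseteq\mathcal{F}\},\subseteq)$, with greatest element $\hat 1=\bigcup\mathcal{F}$; an intersection lattice is one of this form. For $L=\mathbb{L}_{\mathcal{F}}$ and $x\in\hat 1$, let $\min_L(x)=S_{\{X\in\mathcal{F}\mid x\in X\}}$. $L$ is full if for every $U\in L$ with $U\neq\hat 1$ there exists $x\in\hat 1$ with $\min_L(x)=U$. The Möbius function of a finite poset $P$ is defined for $x\le y$ by $\mu_P(y,y)=1$ and $\mu_P(x,y)=-\sum_{x<z\le y}\mu_P(z,y)$. The non-cancelling intersections are $\mathrm{nci}(L)=\{U\in L\mid U\neq\hat 1,\ \mu_L(U,\hat 1)\neq 0\}$. For sets $A,B$, $A\,\dot\cup\,B=A\cup B$ is defined only when $A\cap B=\emptyset$, and $A\,\dot\setminus\,B=A\setminus B$ is defined only when $B\subseteq A$. For a finite family $\mathcal{G}$ of sets, $\bullet(\mathcal{G})$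 is the smallest family of sets containing $\emptyset$ and every member of $\mathcal{G}$ and closed under all well-defined disjoint unions and subset complements. *)

theory Defs
  imports Main
begin

definition nontrivial :: "'a set set \<Rightarrow> bool" where
  "nontrivial F \<longleftrightarrow> finite F \<and> F \<noteq> {} \<and> (\<forall>X\<in>F. X \<noteq> \<Union>F)"

definition S_of :: "'a set set \<Rightarrow> 'a set set \<Rightarrow> 'a set" where
  "S_of F T = (if T = {} then \<Union>F else \<Inter>T)"

text \<open>Carrier of the intersection lattice L_F (ordered by inclusion); its top is the union of F.\<close>
definition ilat :: "'a set set \<Rightarrow> 'a set set" where
  "ilat F = {S_of F T | T. T \<subseteq> F}"

definition min_L :: "'a set set \<Rightarrow> 'a \<Rightarrow> 'a set" where
  "min_L F x = S_of F {X \<in> F. x \<in> X}"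

definition full :: "'a set set \<Rightarrow> bool" where
  "full F \<longleftrightarrow> (\<forall>U\<in>ilat F. U \<noteq> \<Union>F \<longrightarrow> (\<exists>x\<in>\<Union>F. min_L F x = U))"

function mobius :: "'a set set \<Rightarrow> 'a set \<Rightarrow> 'a set \<Rightarrow> int" where
  "mobius P x y =
     (if \<not> finite P then 0
      else if x = y then 1
      else if x \<subset> y then - (\<Sum>z \<in> {z \<in> P. x \<subset> z \<and> z \<subseteq> y}. mobius P z y)
      else 0)"
  by auto
termination
proof (relation "measure (\<lambda>(P, x, y). card {z \<in> P. x \<subset> z \<and> z \<subseteq> y})")
  show "wf (measure (\<lambda>(P, x, y). card {z \<in> P. x \<subset> z \<and> z \<subseteq> y}))" by simp
next
  fix P :: "'a set set" and x y z
  assume fin: "\<not> \<not> finite P" and "x \<noteq> y" "x \<subset> y" and z: "z \<in> {z \<in> P. x \<subset> z \<and> z \<subseteq> y}"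
  have "{w \<in> P. z \<subset> w \<and> w \<subseteq> y} \<subset> {w \<in> P. x \<subset> w \<and> w \<subseteq> y}"
    using z by auto
  then have "card {w \<in> P. z \<subset> w \<and> w \<subseteq> y} < card {w \<in> P. x \<subset> w \<and> w \<subseteq> y}"
    using fin by (intro psubset_card_mono) auto
  then show "((P, z, y), P, x, y) \<in> measure (\<lambda>(P, x, y). card {z \<in> P. x \<subset> z \<and> z \<subseteq> y})"
    by simp
qed

definition nci :: "'a set set \<Rightarrow> 'a set set" where
  "nci F = {U \<in> ilat F. U \<noteq> \<Union>F \<and> mobius (ilat F) U (\<Union>F) \<noteq> 0}"

inductive_set bullet :: "'a set set \<Rightarrow> 'a set set" for G :: "'a set set" where
  empty: "{} \<in> bullet G"
| base: "X \<in> G \<Longrightarrow> X \<in> bullet G"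
| dunion: "A \<in> bullet G \<Longrightarrow> B \<in> bullet G \<Longrightarrow> A \<inter> B = {} \<Longrightarrow> A \<union> B \<in> bullet G"
| sdiff: "A \<in> bullet G \<Longrightarrow> B \<in> bullet G \<Longrightarrow> B \<subseteq> A \<Longrightarrow> A - B \<in> bullet G"

definition lat_iso :: "'a set set \<Rightarrow> 'b set set \<Rightarrow> bool" where
  "lat_iso L L' \<longleftrightarrow> (\<exists>f. bij_betw f L L' \<and> (\<forall>U\<in>L. \<forall>V\<in>L. U \<subseteq> V \<longleftrightarrow> f U \<subseteq> f V))"

end

theory Submission
  imports Defs
begin

declare mobius.simps[simp del]

lemma mob_eq: "finite P \<Longrightarrow> mobius P x x = 1"
  by (subst mobius.simps) simp

lemma mob_lt: "finite P \<Longrightarrow> x \<subset> y \<Longrightarrow>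
  mobius P x y = - (\<Sum>z \<in> {z \<in> P. x \<subset> z \<and> z \<subseteq> y}. mobius P z y)"
  by (subst mobius.simps) auto

lemma mob_nle: "x \<noteq> y \<Longrightarrow> \<not> x \<subset> y \<Longrightarrow> mobius P x y = 0"
  by (subst mobius.simps) auto

lemma mobius_iso:
  "finite P \<Longrightarrow> bij_betw f P P' \<Longrightarrow> (\<forall>U\<in>P. \<forall>V\<in>P. U \<subseteq> V \<longleftrightarrow> f U \<subseteq> f V)
   \<Longrightarrow> x \<in> P \<Longrightarrow> y \<in> P \<Longrightarrow> mobius P' (f x) (f y) = mobius P x y"
proof (induction P x y rule: mobius.induct)
  case (1 P x y)
  have finP: "finite P" by fact
  have bij: "bij_betw f P P'" by fact
  have ord: "\<And>U V. U \<in> P \<Longrightarrow> V \<in> P \<Longrightarrow> U \<subseteq> V \<longleftrightarrow> f U \<subseteq> f V" using 1(4) by blast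
  have xP: "x \<in> P" and yP: "y \<in> P" by fact+
  have finP': "finite P'" using finP bij bij_betw_finite by blast
  have inj: "inj_on f P" using bij_betw_imp_inj_on[OF bij] .
  have img0: "f ` P = P'" using bij_betw_imp_surj_on[OF bij] .
  show ?case
  proof (cases "x = y")
    case True
    then show ?thesis using finP finP' by (simp add: mob_eq)
  next
    case ne: False
    have fne: "f x \<noteq> f y" using inj_on_eq_iff[OF inj xP yP] ne by simp
    show ?thesis
    proof (cases "x \<subset> y")
      case lt: True
      have "f x \<subseteq> f y" using ord[OF xP yP] lt by blast
      then have flt: "f x \<subset> f y" using fne by blast
      let ?S = "{z \<in> P. x \<subset> z \<and> z \<subseteq> y}"
      have img: "f ` ?S = {z \<in> P'. f x \<subset> z \<and> z \<subseteq> f y}"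
      proof
        show "f ` ?S \<subseteq> {z \<in> P'. f x \<subset> z \<and> z \<subseteq> f y}"
        proof
          fix z' assume "z' \<in> f ` ?S"
          then obtain z where z: "z \<in> P" "x \<subset> z" "z \<subseteq> y" "z' = f z" by blast
          have "f x \<subseteq> f z" using ord[OF xP z(1)] z by blast
          moreover have "f x \<noteq> f z" using inj_on_eq_iff[OF inj xP z(1)] z by blast
          moreover have "f z \<subseteq> f y" using ord[OF z(1) yP] z by blast
          moreover have "f z \<in> P'" using img0 z by blast
          ultimately show "z' \<in> {z \<in> P'. f x \<subset> z \<and> z \<subseteq> f y}" using z by blast
        qed
      next
        show "{z \<in> P'. f x \<subset> z \<and> z \<subseteq> f y} \<subseteq> f ` ?S"
        proof
          fix z assume z: "z \<in> {z \<in> P'. f x \<subset> z \<and> z \<subseteq> f y}"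
          then obtain w where w: "w \<in> P" "z = f w" using img0 by blast
          have "x \<subseteq> w" using ord[OF xP w(1)] z w by blast
          moreover have "x \<noteq> w" using z w by blast
          moreover have "w \<subseteq> y" using ord[OF w(1) yP] z w by blast
          ultimately show "z \<in> f ` ?S" using w by blast
        qed
      qed
      have injS: "inj_on f ?S" using inj by (rule inj_on_subset) auto
      have IH: "\<And>z. z \<in> ?S \<Longrightarrow> mobius P' (f z) (f y) = mobius P z y"
        using 1(1)[OF _ ne lt _ finP bij 1(4) _ yP] finP by blast
      have "mobius P' (f x) (f y) = - (\<Sum>z \<in> f ` ?S. mobius P' z (f y))"
        using finP' flt img by (simp add: mob_lt)
      also have "\<dots> = - (\<Sum>z \<in> ?S. mobius P' (f z) (f y))"
        using sum.reindex[OF injS] by simp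
      also have "\<dots> = - (\<Sum>z \<in> ?S. mobius P z y)"
        using IH by simp
      also have "\<dots> = mobius P x y" using finP lt by (simp add: mob_lt)
      finally show ?thesis .
    next
      case nlt: False
      have "\<not> f x \<subset> f y" using nlt ne ord[OF xP yP] fne by blast
      then show ?thesis using nlt ne fne by (simp add: mob_nle)
    qed
  qed
qed

lemma ilat_sub: "U \<in> ilat F \<Longrightarrow> U \<subseteq> \<Union>F"
  unfolding ilat_def S_of_def by (auto split: if_splits)

lemma top_in: "\<Union>F \<in> ilat F"
  unfolding ilat_def S_of_def by auto

lemma min_props:
  assumes "x \<in> \<Union>F"
  shows "x \<in> min_L F x" "min_L F x \<in> ilat F"
proof -
  have ne: "{X \<in> F. x \<in> X} \<noteq> {}" using assms by auto
  show "x \<in> min_L F x" unfolding min_L_def S_of_def using ne by auto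
  show "min_L F x \<in> ilat F" unfolding ilat_def min_L_def by blast
qed

lemma min_ne_top:
  assumes "nontrivial F" "x \<in> \<Union>F"
  shows "min_L F x \<noteq> \<Union>F"
proof -
  obtain X where X: "X \<in> F" "x \<in> X" using assms(2) by auto
  have ne: "{X \<in> F. x \<in> X} \<noteq> {}" using X by auto
  have "min_L F x \<subseteq> X" unfolding min_L_def S_of_def using ne X by auto
  moreover have "X \<noteq> \<Union>F" "X \<subseteq> \<Union>F" using assms(1) X unfolding nontrivial_def by auto
  ultimately show ?thesis by auto
qed

lemma min_le_iff:
  assumes "U \<in> ilat F" "x \<in> \<Union>F"
  shows "x \<in> U \<longleftrightarrow> min_L F x \<subseteq> U"
proof
  assume "x \<in> U"
  then obtain T where T: "T \<subseteq> F" "U = S_of F T" using assms(1) unfolding ilat_def by auto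
  show "min_L F x \<subseteq> U"
  proof (cases "T = {}")
    case True then show ?thesis using T ilat_sub min_props(2)[OF assms(2)] by (simp add: S_of_def)
  next
    case False
    have ne: "{X \<in> F. x \<in> X} \<noteq> {}" using assms(2) by auto
    have "T \<subseteq> {X \<in> F. x \<in> X}" using T False \<open>x \<in> U\<close> by (auto simp: S_of_def)
    then show ?thesis using T False ne by (auto simp: S_of_def min_L_def)
  qed
next
  assume "min_L F x \<subseteq> U" then show "x \<in> U" using min_props(1)[OF assms(2)] by auto
qed

definition phi :: "'a set set \<Rightarrow> 'a set set \<Rightarrow> 'a set" where
  "phi F I = {x \<in> \<Union>F. min_L F x \<in> I}"

lemma phi_down:
  assumes "U \<in> ilat F"
  shows "phi F {V \<in> ilat F. V \<subseteq> U} = U"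
proof
  show "phi F {V \<in> ilat F. V \<subseteq> U} \<subseteq> U"
  proof
    fix x assume "x \<in> phi F {V \<in> ilat F. V \<subseteq> U}"
    then have x: "x \<in> \<Union>F" "min_L F x \<subseteq> U" unfolding phi_def by auto
    then show "x \<in> U" using min_le_iff[OF assms x(1)] by simp
  qed
next
  show "U \<subseteq> phi F {V \<in> ilat F. V \<subseteq> U}"
  proof
    fix x assume xU: "x \<in> U"
    have x: "x \<in> \<Union>F" using ilat_sub[OF assms] xU by (rule subsetD)
    have "min_L F x \<subseteq> U" using min_le_iff[OF assms x] xU by simp
    then show "x \<in> phi F {V \<in> ilat F. V \<subseteq> U}" using x min_props(2)[OF x] unfolding phi_def by simp
  qed
qed

lemma main_ind:
  assumes ntF: "nontrivial F" and ntF': "nontrivial F'"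
    and bij: "bij_betw f (ilat F) (ilat F')"
    and ord: "\<forall>U\<in>ilat F. \<forall>V\<in>ilat F. U \<subseteq> V \<longleftrightarrow> f U \<subseteq> f V"
    and fl: "full F'"
    and ftop: "f (\<Union>F) = \<Union>F'"
    and A: "A \<in> bullet (nci F')"
  shows "\<exists>J \<subseteq> min_L F' ` \<Union>F'. A = phi F' J \<and> phi F {V \<in> ilat F. f V \<in> J} \<in> bullet (nci F)"
  using A
proof (induction rule: bullet.induct)
  case empty
  show ?case by (rule exI[of _ "{}"]) (auto simp: phi_def intro: bullet.empty)
next
  case (base X)
  then have X: "X \<in> ilat F'" "X \<noteq> \<Union>F'" "mobius (ilat F') X (\<Union>F') \<noteq> 0"
    unfolding nci_def by auto
  have "X \<in> f ` ilat F" using X(1) bij_betw_imp_surj_on[OF bij] by simp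
  then obtain W where W: "W \<in> ilat F" "X = f W" by blast
  let ?J = "{V \<in> ilat F'. V \<subseteq> X}"
  have J1: "?J \<subseteq> min_L F' ` \<Union>F'"
  proof
    fix V assume V: "V \<in> ?J"
    have "V \<noteq> \<Union>F'" using V X ilat_sub by blast
    moreover have "V \<in> ilat F'" using V by simp
    ultimately have "\<exists>x\<in>\<Union>F'. min_L F' x = V" using fl unfolding full_def by blast
    then obtain x where "x \<in> \<Union>F'" "min_L F' x = V" by blast
    then show "V \<in> min_L F' ` \<Union>F'" by auto
  qed
  have J2: "X = phi F' ?J" using phi_down[OF X(1)] by simp
  have pre: "{V \<in> ilat F. f V \<in> ?J} = {V \<in> ilat F. V \<subseteq> W}"
    using ord W bij_betw_imp_surj_on[OF bij] by auto
  have finL: "finite (ilat F)"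
  proof -
    have "finite F" using ntF unfolding nontrivial_def by auto
    then have "finite ((S_of F) ` Pow F)" by auto
    moreover have "ilat F = (S_of F) ` Pow F" unfolding ilat_def by auto
    ultimately show ?thesis by simp
  qed
  have "mobius (ilat F') (f W) (f (\<Union>F)) = mobius (ilat F) W (\<Union>F)"
    using mobius_iso[OF finL bij ord W(1) top_in] .
  then have mW: "mobius (ilat F) W (\<Union>F) \<noteq> 0" using X(3) W ftop by simp
  have "W \<noteq> \<Union>F" using W X(2) ftop by auto
  then have "W \<in> nci F" using W(1) mW unfolding nci_def by auto
  then have "phi F {V \<in> ilat F. f V \<in> ?J} \<in> bullet (nci F)"
    using pre phi_down[OF W(1)] by (simp add: bullet.base)
  then show ?case using J1 J2 by (intro exI[of _ ?J] conjI)
next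
  case (dunion A B)
  from dunion.IH(1) obtain J1 where J1: "J1 \<subseteq> min_L F' ` \<Union>F'" "A = phi F' J1"
    "phi F {V \<in> ilat F. f V \<in> J1} \<in> bullet (nci F)" by blast
  from dunion.IH(2) obtain J2 where J2: "J2 \<subseteq> min_L F' ` \<Union>F'" "B = phi F' J2"
    "phi F {V \<in> ilat F. f V \<in> J2} \<in> bullet (nci F)" by blast
  have disj: "J1 \<inter> J2 = {}"
  proof (rule ccontr)
    assume "J1 \<inter> J2 \<noteq> {}"
    then obtain V where "V \<in> J1" "V \<in> J2" by auto
    then obtain x where "x \<in> \<Union>F'" "min_L F' x = V" using J1(1) by (metis imageE subsetD)
    then have "x \<in> A \<inter> B" using \<open>V \<in> J1\<close> \<open>V \<in> J2\<close> unfolding J1(2) J2(2) phi_def by blast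
    then show False using dunion.hyps(3) by auto
  qed
  have eq: "phi F {V \<in> ilat F. f V \<in> J1 \<union> J2} = phi F {V \<in> ilat F. f V \<in> J1} \<union> phi F {V \<in> ilat F. f V \<in> J2}"
    unfolding phi_def by auto
  have dj: "phi F {V \<in> ilat F. f V \<in> J1} \<inter> phi F {V \<in> ilat F. f V \<in> J2} = {}"
    using disj unfolding phi_def by auto
  have "phi F {V \<in> ilat F. f V \<in> J1 \<union> J2} \<in> bullet (nci F)"
    unfolding eq by (rule bullet.dunion[OF J1(3) J2(3) dj])
  moreover have "A \<union> B = phi F' (J1 \<union> J2)" unfolding J1(2) J2(2) phi_def by blast
  moreover have "J1 \<union> J2 \<subseteq> min_L F' ` \<Union>F'" using J1(1) J2(1) by blast
  ultimately show ?case by (intro exI[of _ "J1 \<union> J2"] conjI)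
next
  case (sdiff A B)
  from sdiff.IH(1) obtain J1 where J1: "J1 \<subseteq> min_L F' ` \<Union>F'" "A = phi F' J1"
    "phi F {V \<in> ilat F. f V \<in> J1} \<in> bullet (nci F)" by blast
  from sdiff.IH(2) obtain J2 where J2: "J2 \<subseteq> min_L F' ` \<Union>F'" "B = phi F' J2"
    "phi F {V \<in> ilat F. f V \<in> J2} \<in> bullet (nci F)" by blast
  have sub: "J2 \<subseteq> J1"
  proof
    fix V assume "V \<in> J2"
    then obtain x where x: "x \<in> \<Union>F'" "min_L F' x = V" using J2(1) by (metis imageE subsetD)
    then have "x \<in> B" using \<open>V \<in> J2\<close> unfolding J2(2) phi_def by blast
    then have "x \<in> A" using sdiff.hyps(3) by auto
    then show "V \<in> J1" using x unfolding J1(2) phi_def by blast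
  qed
  have eq: "phi F {V \<in> ilat F. f V \<in> J1 - J2} = phi F {V \<in> ilat F. f V \<in> J1} - phi F {V \<in> ilat F. f V \<in> J2}"
    unfolding phi_def by auto
  have sb: "phi F {V \<in> ilat F. f V \<in> J2} \<subseteq> phi F {V \<in> ilat F. f V \<in> J1}"
    using sub unfolding phi_def by auto
  have "phi F {V \<in> ilat F. f V \<in> J1 - J2} \<in> bullet (nci F)"
    unfolding eq by (rule bullet.sdiff[OF J1(3) J2(3) sb])
  moreover have "A - B = phi F' (J1 - J2)" unfolding J1(2) J2(2) phi_def by blast
  moreover have "J1 - J2 \<subseteq> min_L F' ` \<Union>F'" using J1(1) by blast
  ultimately show ?case by (intro exI[of _ "J1 - J2"] conjI)
qed

theorem lemma4p4:
  fixes F :: "'a set set" and F' :: "'b set set"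
  assumes "nontrivial F" and "nontrivial F'"
    and "lat_iso (ilat F) (ilat F')"
    and "full F'"
    and "\<Union>F' \<in> bullet (nci F')"
  shows "\<Union>F \<in> bullet (nci F)"
proof -
  obtain f where f: "bij_betw f (ilat F) (ilat F') \<and> (\<forall>U\<in>ilat F. \<forall>V\<in>ilat F. U \<subseteq> V \<longleftrightarrow> f U \<subseteq> f V)"
    using assms(3) unfolding lat_iso_def by (rule exE)
  have bij: "bij_betw f (ilat F) (ilat F')" using f by (rule conjunct1)
  have ord: "\<forall>U\<in>ilat F. \<forall>V\<in>ilat F. U \<subseteq> V \<longleftrightarrow> f U \<subseteq> f V" using f by (rule conjunct2)
  have ftop: "f (\<Union>F) = \<Union>F'"
  proof -
    have "f (\<Union>F) \<in> ilat F'" using bij_betw_apply[OF bij top_in] .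
    then have a: "f (\<Union>F) \<subseteq> \<Union>F'" by (rule ilat_sub)
    obtain W where W: "W \<in> ilat F" "f W = \<Union>F'" using bij_betw_imp_surj_on[OF bij] top_in[of F']
      by (metis imageE)
    have "W \<subseteq> \<Union>F" using W ilat_sub by blast
    then have "f W \<subseteq> f (\<Union>F)" using ord W top_in by blast
    then show ?thesis using a W by auto
  qed
  obtain J where J: "J \<subseteq> min_L F' ` \<Union>F'" "\<Union>F' = phi F' J"
    "phi F {V \<in> ilat F. f V \<in> J} \<in> bullet (nci F)"
    using main_ind[OF assms(1,2) bij ord assms(4) ftop assms(5)] by blast
  have Jall: "\<forall>V \<in> ilat F'. V \<noteq> \<Union>F' \<longrightarrow> V \<in> J"
  proof (intro ballI impI)
    fix V assume "V \<in> ilat F'" "V \<noteq> \<Union>F'"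
    then have "\<exists>x\<in>\<Union>F'. min_L F' x = V" using assms(4) unfolding full_def by blast
    then obtain x where x: "x \<in> \<Union>F'" "min_L F' x = V" by blast
    then have "x \<in> phi F' J" using J(2) by simp
    then show "V \<in> J" using x unfolding phi_def by auto
  qed
  have "phi F {V \<in> ilat F. f V \<in> J} = \<Union>F"
  proof
    show "phi F {V \<in> ilat F. f V \<in> J} \<subseteq> \<Union>F" unfolding phi_def by auto
  next
    show "\<Union>F \<subseteq> phi F {V \<in> ilat F. f V \<in> J}"
    proof
      fix x assume x: "x \<in> \<Union>F"
      let ?m = "min_L F x"
      have m: "?m \<in> ilat F" "?m \<noteq> \<Union>F" using min_props(2)[OF x] min_ne_top[OF assms(1) x] by auto
      have "f ?m \<noteq> \<Union>F'" using m ftop inj_on_eq_iff[OF bij_betw_imp_inj_on[OF bij] m(1) top_in] by simp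
      moreover have "f ?m \<in> ilat F'" using bij_betw_apply[OF bij m(1)] .
      ultimately have "f ?m \<in> J" using Jall by auto
      then show "x \<in> phi F {V \<in> ilat F. f V \<in> J}" using x m unfolding phi_def by auto
    qed
  qed
  then show ?thesis using J(3) by simp
qed

end
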